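(* Let $\Omega\subset\mathbb{R}^N$ ($N\ge2$) be a bounded smooth domain, $1<q<2<p$, $a,b\in C^\alpha(\overline\Omega)$, and assume that $\Omega^a_+$ and $\Omega^a_-$ are subdomains of $\Omega$ with smooth boundary such that $\overline{\Omega^a_+}\subset\Omega$ and $\overline{\Omega^a_+}\cup\Omega^a_-=\Omega$. Let $\Lambda>0$, and suppose there exists $C_1>0$ such that $\|u\|_{C(\overline{\Omega^a_+})}\le C_1$ for all nontrivial non-negative solutions $u$ of $(P_{\lambda,\epsilon})$ with $\lambda\in[0,\Lambda]$ and $\epsilon\in(0,1]$. Then there exists $C_2>0$ such that $\|u\|_{C(\overline\Omega)}\le C_2$ for all nontrivial non-negative solutions $u$ of $(P_{\lambda,\epsilon})$ with $\lambda\in[0,\Lambda]$ and $\epsilon\in(0,1]$.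
   Context: $(P_{\lambda,\epsilon})$: $-\Delta u=\lambda(b(x)-\epsilon)|u+\epsilon|^{q-2}u+a(x)|u|^{p-2}u$ in $\Omega$, $\frac{\partial u}{\partial\mathbf{n}}=0$ on $\partial\Omega$. $\Omega^a_\pm=\{x\in\Omega:a(x)\gtrless0\}$; a subdomain is a connected open subset. *)

theory Defs
  imports "HOL-Analysis.Analysis"
begin

definition pd :: "'n::finite \<Rightarrow> (real^'n \<Rightarrow> real) \<Rightarrow> real^'n \<Rightarrow> real" where
  "pd i f x = deriv (\<lambda>t. f (x + t *\<^sub>R axis i 1)) 0"

primrec Ck_on :: "nat \<Rightarrow> (real^'n::finite) set \<Rightarrow> (real^'n \<Rightarrow> real) \<Rightarrow> bool" where
  "Ck_on 0 U f = continuous_on U f"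
| "Ck_on (Suc k) U f = (continuous_on U f \<and>
     (\<forall>x\<in>U. \<forall>i. (\<lambda>t. f (x + t *\<^sub>R axis i 1)) differentiable (at 0)) \<and>
     (\<forall>i. Ck_on k U (pd i f)))"

definition smooth_on :: "(real^'n::finite) set \<Rightarrow> (real^'n \<Rightarrow> real) \<Rightarrow> bool" where
  "smooth_on U f = (\<forall>k. Ck_on k U f)"

definition grad :: "(real^'n::finite \<Rightarrow> real) \<Rightarrow> real^'n \<Rightarrow> real^'n" where
  "grad f x = (\<chi> i. pd i f x)"

definition laplacian :: "(real^'n::finite \<Rightarrow> real) \<Rightarrow> real^'n \<Rightarrow> real" where
  "laplacian f x = (\<Sum>i\<in>UNIV. pd i (pd i f) x)"

definition defining_function :: "(real^'n::finite) set \<Rightarrow> (real^'n \<Rightarrow> real) \<Rightarrow> bool" where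
  "defining_function \<Omega> \<rho> = (smooth_on UNIV \<rho> \<and> \<Omega> = {x. \<rho> x < 0} \<and>
      frontier \<Omega> = {x. \<rho> x = 0} \<and> (\<forall>x\<in>frontier \<Omega>. grad \<rho> x \<noteq> 0))"

definition smooth_bounded_domain :: "(real^'n::finite) set \<Rightarrow> bool" where
  "smooth_bounded_domain \<Omega> = (open \<Omega> \<and> connected \<Omega> \<and> \<Omega> \<noteq> {} \<and> bounded \<Omega> \<and>
      (\<exists>\<rho>. defining_function \<Omega> \<rho>))"

definition outward_normal :: "(real^'n::finite) set \<Rightarrow> real^'n \<Rightarrow> real^'n" where
  "outward_normal \<Omega> x = (let \<rho> = (SOME \<rho>. defining_function \<Omega> \<rho>) in
      (1 / norm (grad \<rho> x)) *\<^sub>R grad \<rho> x)"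

definition normal_derivative :: "(real^'n::finite) set \<Rightarrow> (real^'n \<Rightarrow> real) \<Rightarrow> real^'n \<Rightarrow> real" where
  "normal_derivative \<Omega> u x = grad u x \<bullet> outward_normal \<Omega> x"

definition holder_on :: "real \<Rightarrow> (real^'n::finite) set \<Rightarrow> (real^'n \<Rightarrow> real) \<Rightarrow> bool" where
  "holder_on \<alpha> S f = (bounded (f ` S) \<and>
      (\<exists>H. \<forall>x\<in>S. \<forall>y\<in>S. \<bar>f x - f y\<bar> \<le> H * dist x y powr \<alpha>))"

(* classical solution u \<in> C^2(\<Omega>) \<inter> C^1(closure \<Omega>) of (P_{\<lambda>,\<epsilon>}) with Neumann condition *)
definition is_solution :: "(real^'n::finite) set \<Rightarrow> (real^'n \<Rightarrow> real) \<Rightarrow> (real^'n \<Rightarrow> real) \<Rightarrow>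
    real \<Rightarrow> real \<Rightarrow> real \<Rightarrow> real \<Rightarrow> (real^'n \<Rightarrow> real) \<Rightarrow> bool" where
  "is_solution \<Omega> a b p q lam \<epsilon> u = (
     Ck_on 2 \<Omega> u \<and> (\<exists>U. open U \<and> closure \<Omega> \<subseteq> U \<and> Ck_on 1 U u) \<and>
     (\<forall>x\<in>\<Omega>. - laplacian u x =
         lam * (b x - \<epsilon>) * \<bar>u x + \<epsilon>\<bar> powr (q - 2) * u x + a x * \<bar>u x\<bar> powr (p - 2) * u x) \<and>
     (\<forall>x\<in>frontier \<Omega>. normal_derivative \<Omega> u x = 0))"

definition nontrivial_nonneg_solution :: "(real^'n::finite) set \<Rightarrow> (real^'n \<Rightarrow> real) \<Rightarrow> (real^'n \<Rightarrow> real) \<Rightarrow>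
    real \<Rightarrow> real \<Rightarrow> real \<Rightarrow> real \<Rightarrow> (real^'n \<Rightarrow> real) \<Rightarrow> bool" where
  "nontrivial_nonneg_solution \<Omega> a b p q lam \<epsilon> u = (is_solution \<Omega> a b p q lam \<epsilon> u \<and>
     (\<forall>x\<in>closure \<Omega>. u x \<ge> 0) \<and> (\<exists>x\<in>\<Omega>. u x \<noteq> 0))"

end

theory Submission
  imports Defs
begin


lemma shift_deriv:
  fixes f :: "real^'n \<Rightarrow> real"
  assumes "(\<lambda>t. f (x + s *\<^sub>R v + t *\<^sub>R v)) differentiable (at 0)"
  shows "((\<lambda>s. f (x + s *\<^sub>R v)) has_real_derivative deriv (\<lambda>t. f (x + s *\<^sub>R v + t *\<^sub>R v)) 0) (at s)"
proof -
  let ?g = "\<lambda>s. f (x + s *\<^sub>R v)"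
  have D: "((\<lambda>t. f (x + s *\<^sub>R v + t *\<^sub>R v)) has_real_derivative deriv (\<lambda>t. f (x + s *\<^sub>R v + t *\<^sub>R v)) 0) (at 0)"
    using assms DERIV_deriv_iff_real_differentiable by blast
  have eq: "(\<lambda>t. f (x + s *\<^sub>R v + t *\<^sub>R v)) = (\<lambda>t. ?g (t + s))"
    by (auto simp: algebra_simps scaleR_add_left)
  show ?thesis using D unfolding eq using DERIV_shift[of ?g _ 0 s] by simp
qed

lemma pd_deriv:
  fixes f :: "real^'n \<Rightarrow> real"
  assumes "(\<lambda>t. f (x + s *\<^sub>R axis i 1 + t *\<^sub>R axis i 1)) differentiable (at 0)"
  shows "((\<lambda>s. f (x + s *\<^sub>R axis i 1)) has_real_derivative pd i f (x + s *\<^sub>R axis i 1)) (at s)"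
  using shift_deriv[OF assms] unfolding pd_def by (simp add: add.assoc)

lemma mvt_sym:
  fixes \<phi> :: "real \<Rightarrow> real"
  assumes "\<And>z. \<bar>z\<bar> \<le> \<bar>c\<bar> \<Longrightarrow> (\<phi> has_real_derivative \<phi>' z) (at z)"
  shows "\<exists>\<zeta>. \<bar>\<zeta>\<bar> \<le> \<bar>c\<bar> \<and> \<phi> c - \<phi> 0 = c * \<phi>' \<zeta>"
proof (cases c "0::real" rule: linorder_cases)
  case less
  then obtain z where "c < z" "z < 0" "\<phi> 0 - \<phi> c = (0 - c) * \<phi>' z"
    using MVT2[of c 0 \<phi> \<phi>'] assms by fastforce
  then show ?thesis by (intro exI[of _ z]) (auto simp: algebra_simps)
next
  case equal then show ?thesis by auto
next
  case greater
  then obtain z where "0 < z" "z < c" "\<phi> c - \<phi> 0 = (c - 0) * \<phi>' z"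
    using MVT2[of 0 c \<phi> \<phi>'] assms by fastforce
  then show ?thesis by (intro exI[of _ z]) auto
qed

lemma dist_helper:
  fixes x P :: "real^'n"
  shows "dist (x + s *\<^sub>R P + z *\<^sub>R axis k (1::real)) x \<le> \<bar>s\<bar> * norm P + \<bar>z\<bar>"
proof -
  have "dist (x + s *\<^sub>R P + z *\<^sub>R axis k (1::real)) x = norm (s *\<^sub>R P + z *\<^sub>R axis k (1::real))"
    by (simp add: dist_norm)
  also have "\<dots> \<le> norm (s *\<^sub>R P) + norm (z *\<^sub>R axis k (1::real))" by (rule norm_triangle_ineq)
  finally show ?thesis by simp
qed

lemma step_lim:
  fixes f :: "real^'n \<Rightarrow> real"
  assumes U: "open U" "x \<in> U"
    and diff: "\<forall>y\<in>U. \<forall>i. (\<lambda>t. f (y + t *\<^sub>R axis i 1)) differentiable (at 0)"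
    and cont: "continuous_on U (pd k f)"
  shows "((\<lambda>s. (f (x + s *\<^sub>R P + (s * c) *\<^sub>R axis k 1) - f (x + s *\<^sub>R P)) / s) \<longlongrightarrow> c * pd k f x) (at 0)"
  unfolding LIM_eq
proof (intro allI impI)
  fix r :: real assume r: "r > 0"
  obtain e where e: "e > 0" "ball x e \<subseteq> U" using U open_contains_ball by blast
  have "r / (\<bar>c\<bar> + 1) > 0" using r by auto
  then obtain d where d: "d > 0" "\<forall>x'\<in>U. dist x' x < d \<longrightarrow> dist (pd k f x') (pd k f x) < r / (\<bar>c\<bar> + 1)"
    using cont U(2) unfolding continuous_on_iff by blast
  define d1 where "d1 = min e d"
  have d1: "d1 > 0" using e d by (auto simp: d1_def)
  have d1U: "\<And>y. dist y x < d1 \<Longrightarrow> y \<in> U \<and> \<bar>pd k f y - pd k f x\<bar> < r / (\<bar>c\<bar> + 1)"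
  proof -
    fix y assume "dist y x < d1"
    then have "y \<in> U" "dist y x < d" using e(2) by (auto simp: d1_def dist_commute)
    then show "y \<in> U \<and> \<bar>pd k f y - pd k f x\<bar> < r / (\<bar>c\<bar> + 1)" using d(2) by (auto simp: dist_real_def)
  qed
  have npos: "norm P + \<bar>c\<bar> + 1 > 0" by (smt (verit) norm_ge_zero)
  define s0 where "s0 = d1 / (norm P + \<bar>c\<bar> + 1)"
  have s0: "s0 > 0" using d1 unfolding s0_def by (intro divide_pos_pos) (auto intro: add_nonneg_pos)
  show "\<exists>s>0. \<forall>xa. xa \<noteq> 0 \<and> norm (xa - 0) < s \<longrightarrow>
      norm ((f (x + xa *\<^sub>R P + (xa * c) *\<^sub>R axis k 1) - f (x + xa *\<^sub>R P)) / xa - c * pd k f x) < r"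
  proof (intro exI[of _ s0] conjI allI impI s0)
    fix s :: real assume s: "s \<noteq> 0 \<and> norm (s - 0) < s0"
    define y where "y = x + s *\<^sub>R P"
    have sbound: "\<bar>s\<bar> * (norm P + \<bar>c\<bar>) < d1"
    proof -
      have "\<bar>s\<bar> * (norm P + \<bar>c\<bar>) \<le> \<bar>s\<bar> * (norm P + \<bar>c\<bar> + 1)" by (simp add: mult_left_mono)
      also have "\<dots> < s0 * (norm P + \<bar>c\<bar> + 1)"
        using s npos by (intro mult_strict_right_mono) auto
      also have "\<dots> = d1" unfolding s0_def using npos by simp
      finally show ?thesis .
    qed
    show "norm ((f (x + s *\<^sub>R P + (s * c) *\<^sub>R axis k 1) - f (x + s *\<^sub>R P)) / s - c * pd k f x) < r"
    proof (cases "c = 0")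
      case True then show ?thesis using r by simp
    next
      case False
      have der: "((\<lambda>z. f (y + z *\<^sub>R axis k 1)) has_real_derivative pd k f (y + z *\<^sub>R axis k 1)) (at z)"
        if z: "\<bar>z\<bar> \<le> \<bar>s * c\<bar>" for z
      proof -
        have "dist (y + z *\<^sub>R axis k 1) x \<le> \<bar>s\<bar> * norm P + \<bar>z\<bar>"
          unfolding y_def by (rule dist_helper)
        also have "\<dots> \<le> \<bar>s\<bar> * (norm P + \<bar>c\<bar>)" using z by (simp add: abs_mult algebra_simps)
        finally have "dist (y + z *\<^sub>R axis k 1) x < d1" using sbound by linarith
        then have "y + z *\<^sub>R axis k 1 \<in> U" using d1U by blast
        then show ?thesis using diff by (intro pd_deriv) auto
      qed
      obtain \<zeta> where \<zeta>: "\<bar>\<zeta>\<bar> \<le> \<bar>s * c\<bar>"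
        "f (y + (s * c) *\<^sub>R axis k 1) - f (y + 0 *\<^sub>R axis k 1) = (s * c) * pd k f (y + \<zeta> *\<^sub>R axis k 1)"
        using mvt_sym[of "s * c" "\<lambda>z. f (y + z *\<^sub>R axis k 1)" "\<lambda>z. pd k f (y + z *\<^sub>R axis k 1)"] der by blast
      have q: "(f (x + s *\<^sub>R P + (s * c) *\<^sub>R axis k 1) - f (x + s *\<^sub>R P)) / s = c * pd k f (y + \<zeta> *\<^sub>R axis k 1)"
        using \<zeta>(2) s by (simp add: y_def)
      have "dist (y + \<zeta> *\<^sub>R axis k 1) x \<le> \<bar>s\<bar> * norm P + \<bar>\<zeta>\<bar>"
        unfolding y_def by (rule dist_helper)
      also have "\<dots> \<le> \<bar>s\<bar> * (norm P + \<bar>c\<bar>)" using \<zeta>(1) by (simp add: abs_mult algebra_simps)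
      finally have "dist (y + \<zeta> *\<^sub>R axis k 1) x < d1" using sbound by linarith
      then have lt: "\<bar>pd k f (y + \<zeta> *\<^sub>R axis k 1) - pd k f x\<bar> < r / (\<bar>c\<bar> + 1)" using d1U by blast
      have "\<bar>c * pd k f (y + \<zeta> *\<^sub>R axis k 1) - c * pd k f x\<bar> = \<bar>c\<bar> * \<bar>pd k f (y + \<zeta> *\<^sub>R axis k 1) - pd k f x\<bar>"
        by (simp add: abs_mult[symmetric] algebra_simps)
      also have "\<dots> \<le> \<bar>c\<bar> * (r / (\<bar>c\<bar> + 1))" using lt by (intro mult_left_mono) auto
      also have "\<dots> < r" using r by (simp add: field_simps)
      finally show ?thesis using q by simp
    qed
  qed
qed

lemma basis_expansion_R: "(\<Sum>i\<in>UNIV. d$i *\<^sub>R axis i (1::real)) = (d::real^'n)"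
  using basis_expansion[of d] by (simp add: scalar_mult_eq_scaleR)

lemma dir_deriv:
  fixes f :: "real^'n \<Rightarrow> real"
  assumes U: "open U" "x \<in> U"
    and diff: "\<forall>y\<in>U. \<forall>i. (\<lambda>t. f (y + t *\<^sub>R axis i 1)) differentiable (at 0)"
    and cont: "\<forall>i. continuous_on U (pd i f)"
  shows "((\<lambda>s. f (x + s *\<^sub>R d)) has_real_derivative (\<Sum>i\<in>UNIV. pd i f x * d$i)) (at 0)"
proof -
  have claim: "((\<lambda>s. (f (x + s *\<^sub>R (\<Sum>i\<in>S. d$i *\<^sub>R axis i 1)) - f x)/s) \<longlongrightarrow> (\<Sum>i\<in>S. pd i f x * d$i)) (at 0)"
    if "finite S" for S
    using that
  proof (induction S rule: finite_induct)
    case empty show ?case by simp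
  next
    case (insert k S)
    let ?P = "\<Sum>i\<in>S. d$i *\<^sub>R axis i (1::real)"
    have eq: "(\<lambda>s. (f (x + s *\<^sub>R (\<Sum>i\<in>insert k S. d$i *\<^sub>R axis i 1)) - f x)/s) =
      (\<lambda>s. (f (x + s *\<^sub>R ?P + (s * d$k) *\<^sub>R axis k 1) - f (x + s *\<^sub>R ?P)) / s + (f (x + s *\<^sub>R ?P) - f x)/s)"
    proof
      fix s
      have "x + s *\<^sub>R (\<Sum>i\<in>insert k S. d$i *\<^sub>R axis i 1) = x + s *\<^sub>R ?P + (s * d$k) *\<^sub>R axis k 1"
        using insert by (simp add: scaleR_add_right algebra_simps)
      then show "(f (x + s *\<^sub>R (\<Sum>i\<in>insert k S. d$i *\<^sub>R axis i 1)) - f x)/s =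
        (f (x + s *\<^sub>R ?P + (s * d$k) *\<^sub>R axis k 1) - f (x + s *\<^sub>R ?P)) / s + (f (x + s *\<^sub>R ?P) - f x)/s"
        by (simp add: add_divide_distrib[symmetric] add.assoc)
    qed
    have "((\<lambda>s. (f (x + s *\<^sub>R ?P + (s * d$k) *\<^sub>R axis k 1) - f (x + s *\<^sub>R ?P)) / s + (f (x + s *\<^sub>R ?P) - f x)/s)
       \<longlongrightarrow> d$k * pd k f x + (\<Sum>i\<in>S. pd i f x * d$i)) (at 0)"
      by (intro tendsto_add step_lim[OF U diff] cont[rule_format] insert.IH)
    then show ?case unfolding eq using insert by (simp add: mult.commute)
  qed
  have "((\<lambda>s. (f (x + s *\<^sub>R d) - f x)/s) \<longlongrightarrow> (\<Sum>i\<in>UNIV. pd i f x * d$i)) (at 0)"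
    using claim[of UNIV] by (simp add: basis_expansion_R)
  then show ?thesis unfolding DERIV_def by simp
qed

lemma max2:
  fixes g h g' h' :: "real \<Rightarrow> real"
  assumes r: "r > 0"
    and dg: "\<And>s. \<bar>s\<bar> < r \<Longrightarrow> (g has_real_derivative g' s) (at s)"
    and dh: "\<And>s. \<bar>s\<bar> < r \<Longrightarrow> (h has_real_derivative h' s) (at s)"
    and dg2: "(g' has_real_derivative g2) (at 0)"
    and dh2: "(h' has_real_derivative h2) (at 0)"
    and mx: "\<And>s. \<bar>s\<bar> < r \<Longrightarrow> g s - t * h s \<le> g 0 - t * h 0"
  shows "g2 \<le> t * h2"
proof (rule ccontr)
  assume neg: "\<not> g2 \<le> t * h2"
  define G where "G = (\<lambda>s. g s - t * h s)"
  define G' where "G' = (\<lambda>s. g' s - t * h' s)"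
  have dG: "(G has_real_derivative G' s) (at s)" if "\<bar>s\<bar> < r" for s
    unfolding G_def G'_def using dg[OF that] dh[OF that] by (intro DERIV_diff DERIV_cmult) auto
  have "G' 0 = 0"
    using DERIV_local_max[OF dG[of 0] r] mx r unfolding G_def by auto
  have dG2: "(G' has_real_derivative g2 - t * h2) (at 0)"
    unfolding G'_def using dg2 dh2 by (intro DERIV_diff DERIV_cmult) auto
  obtain d where d: "d > 0" "\<And>hh. hh > 0 \<Longrightarrow> hh < d \<Longrightarrow> G' 0 < G' (0 + hh)"
    using DERIV_pos_inc_right[OF dG2] neg by force
  define s where "s = min d r / 2"
  have s: "0 < s" "s < d" "s < r" using d r by (auto simp: s_def)
  obtain z where z: "0 < z" "z < s" "G s - G 0 = (s - 0) * G' z"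
    using MVT2[of 0 s G G'] s dG by fastforce
  have "G' z > 0" using d(2)[of z] z s \<open>G' 0 = 0\<close> by auto
  then have "G s > G 0" using z s by (simp add: algebra_simps)
  then show False using mx[of s] s unfolding G_def by auto
qed

lemma pd2_le:
  fixes u w :: "real^'n \<Rightarrow> real"
  assumes r: "r > 0"
    and du: "\<And>s. \<bar>s\<bar> < r \<Longrightarrow> (\<lambda>t. u (x + s *\<^sub>R axis i 1 + t *\<^sub>R axis i 1)) differentiable (at 0)"
    and dw: "\<And>s. \<bar>s\<bar> < r \<Longrightarrow> (\<lambda>t. w (x + s *\<^sub>R axis i 1 + t *\<^sub>R axis i 1)) differentiable (at 0)"
    and du2: "(\<lambda>t. pd i u (x + t *\<^sub>R axis i 1)) differentiable (at 0)"
    and dw2: "(\<lambda>t. pd i w (x + t *\<^sub>R axis i 1)) differentiable (at 0)"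
    and mx: "\<And>s. \<bar>s\<bar> < r \<Longrightarrow> u (x + s *\<^sub>R axis i 1) - t * w (x + s *\<^sub>R axis i 1) \<le> u x - t * w x"
  shows "pd i (pd i u) x \<le> t * pd i (pd i w) x"
proof -
  have a: "((\<lambda>t. pd i u (x + t *\<^sub>R axis i 1)) has_real_derivative pd i (pd i u) x) (at 0)"
    using du2 DERIV_deriv_iff_real_differentiable unfolding pd_def[of i "pd i u"] by blast
  have b: "((\<lambda>t. pd i w (x + t *\<^sub>R axis i 1)) has_real_derivative pd i (pd i w) x) (at 0)"
    using dw2 DERIV_deriv_iff_real_differentiable unfolding pd_def[of i "pd i w"] by blast
  show ?thesis
    by (rule max2[OF r pd_deriv[OF du] pd_deriv[OF dw] a b]) (use mx in auto)
qed

lemma pd_hasderiv: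
  assumes "(\<lambda>t. f (y + t *\<^sub>R axis i 1)) differentiable (at 0)"
  shows "((\<lambda>t. f (y + t *\<^sub>R axis i 1)) has_real_derivative pd i f y) (at 0)"
  using assms DERIV_deriv_iff_real_differentiable unfolding pd_def by blast

lemma pd_w:
  fixes \<tau> :: "real^'n \<Rightarrow> real"
  assumes d\<tau>: "\<forall>y i. (\<lambda>t. \<tau> (y + t *\<^sub>R axis i 1)) differentiable (at 0)"
  shows "pd i (\<lambda>x. A - exp (- (j * \<tau> x))) = (\<lambda>y. j * exp (- (j * \<tau> y)) * pd i \<tau> y)"
proof
  fix y
  have D: "((\<lambda>t. \<tau> (y + t *\<^sub>R axis i 1)) has_real_derivative pd i \<tau> y) (at 0)"
    by (rule pd_hasderiv) (use d\<tau> in blast)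
  have "((\<lambda>t. A - exp (- (j * \<tau> (y + t *\<^sub>R axis i 1)))) has_real_derivative
      - (exp (- (j * \<tau> (y + 0 *\<^sub>R axis i 1))) * (- (j * pd i \<tau> y)))) (at 0)"
    apply (intro derivative_eq_intros)
    apply (rule refl | rule D)+
    by simp
  then show "pd i (\<lambda>x. A - exp (- (j * \<tau> x))) y = j * exp (- (j * \<tau> y)) * pd i \<tau> y"
    unfolding pd_def[of i "\<lambda>x. A - exp (- (j * \<tau> x))"] by (simp add: DERIV_imp_deriv)
qed

lemma w_diff:
  fixes \<tau> :: "real^'n \<Rightarrow> real"
  assumes d\<tau>: "\<forall>y i. (\<lambda>t. \<tau> (y + t *\<^sub>R axis i 1)) differentiable (at 0)"
  shows "(\<lambda>t. A - exp (- (j * \<tau> (y + t *\<^sub>R axis i 1)))) differentiable (at 0)"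
proof -
  have D: "((\<lambda>t. \<tau> (y + t *\<^sub>R axis i 1)) has_real_derivative pd i \<tau> y) (at 0)"
    by (rule pd_hasderiv) (use d\<tau> in blast)
  have "((\<lambda>t. A - exp (- (j * \<tau> (y + t *\<^sub>R axis i 1)))) has_real_derivative
      - (exp (- (j * \<tau> (y + 0 *\<^sub>R axis i 1))) * (- (j * pd i \<tau> y)))) (at 0)"
    apply (intro derivative_eq_intros)
    apply (rule refl | rule D)+
    by simp
  then show ?thesis using real_differentiable_def by blast
qed

lemma pd2_w:
  fixes \<tau> :: "real^'n \<Rightarrow> real"
  assumes d\<tau>: "\<forall>y i. (\<lambda>t. \<tau> (y + t *\<^sub>R axis i 1)) differentiable (at 0)"
    and d\<tau>2: "\<forall>y i k. (\<lambda>t. pd k \<tau> (y + t *\<^sub>R axis i 1)) differentiable (at 0)"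
  shows "pd i (pd i (\<lambda>x. A - exp (- (j * \<tau> x)))) x =
     j * exp (- (j * \<tau> x)) * (pd i (pd i \<tau>) x - j * (pd i \<tau> x)\<^sup>2)"
    and "(\<lambda>t. pd i (\<lambda>x. A - exp (- (j * \<tau> x))) (x + t *\<^sub>R axis i 1)) differentiable (at 0)"
proof -
  have D: "((\<lambda>t. \<tau> (x + t *\<^sub>R axis i 1)) has_real_derivative pd i \<tau> x) (at 0)"
    by (rule pd_hasderiv) (use d\<tau> in blast)
  have D2: "((\<lambda>t. pd i \<tau> (x + t *\<^sub>R axis i 1)) has_real_derivative pd i (pd i \<tau>) x) (at 0)"
    by (rule pd_hasderiv) (use d\<tau>2 in blast)
  have H: "((\<lambda>t. j * exp (- (j * \<tau> (x + t *\<^sub>R axis i 1))) * pd i \<tau> (x + t *\<^sub>R axis i 1)) has_real_derivative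
      j * (exp (- (j * \<tau> (x + 0 *\<^sub>R axis i 1))) * (- (j * pd i \<tau> x))) * pd i \<tau> (x + 0 *\<^sub>R axis i 1)
      + j * exp (- (j * \<tau> (x + 0 *\<^sub>R axis i 1))) * pd i (pd i \<tau>) x) (at 0)"
    apply (intro derivative_eq_intros)
    apply (rule refl | rule D | rule D2)+
    by (simp add: algebra_simps)
  show "pd i (pd i (\<lambda>x. A - exp (- (j * \<tau> x)))) x =
     j * exp (- (j * \<tau> x)) * (pd i (pd i \<tau>) x - j * (pd i \<tau> x)\<^sup>2)"
    unfolding pd_w[OF d\<tau>] pd_def[of i "\<lambda>y. j * exp (- (j * \<tau> y)) * pd i \<tau> y"]
    using DERIV_imp_deriv[OF H] by (simp add: algebra_simps power2_eq_square)
  show "(\<lambda>t. pd i (\<lambda>x. A - exp (- (j * \<tau> x))) (x + t *\<^sub>R axis i 1)) differentiable (at 0)"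
    unfolding pd_w[OF d\<tau>] using H real_differentiable_def by blast
qed

lemma lap_w:
  fixes \<tau> :: "real^'n \<Rightarrow> real"
  assumes d\<tau>: "\<forall>y i. (\<lambda>t. \<tau> (y + t *\<^sub>R axis i 1)) differentiable (at 0)"
    and d\<tau>2: "\<forall>y i k. (\<lambda>t. pd k \<tau> (y + t *\<^sub>R axis i 1)) differentiable (at 0)"
  shows "laplacian (\<lambda>x. A - exp (- (j * \<tau> x))) x =
     j * exp (- (j * \<tau> x)) * (laplacian \<tau> x - j * (\<Sum>i\<in>UNIV. (pd i \<tau> x)\<^sup>2))"
  unfolding laplacian_def pd2_w(1)[OF d\<tau> d\<tau>2]
  by (simp add: sum_distrib_left sum_subtractf right_diff_distrib)



lemma Ck2_facts:
  assumes "Ck_on 2 U f"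
  shows "continuous_on U f" "\<forall>y\<in>U. \<forall>i. (\<lambda>t. f (y + t *\<^sub>R axis i 1)) differentiable (at 0)"
    "\<forall>i. continuous_on U (pd i f)"
    "\<forall>y\<in>U. \<forall>i k. (\<lambda>t. pd k f (y + t *\<^sub>R axis i 1)) differentiable (at 0)"
    "\<forall>i k. continuous_on U (pd k (pd i f))"
  using assms by (auto simp: numeral_2_eq_2)

lemma Ck1_facts:
  assumes "Ck_on 1 U f"
  shows "continuous_on U f" "\<forall>y\<in>U. \<forall>i. (\<lambda>t. f (y + t *\<^sub>R axis i 1)) differentiable (at 0)"
    "\<forall>i. continuous_on U (pd i f)"
  using assms by auto

lemma smooth_facts:
  assumes "smooth_on UNIV f"
  shows "continuous_on UNIV f" "\<forall>y i. (\<lambda>t. f (y + t *\<^sub>R axis i 1)) differentiable (at 0)"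
    "\<forall>i. continuous_on UNIV (pd i f)"
    "\<forall>y i k. (\<lambda>t. pd k f (y + t *\<^sub>R axis i 1)) differentiable (at 0)"
    "\<forall>i k. continuous_on UNIV (pd k (pd i f))"
  using Ck2_facts[of UNIV f] assms unfolding smooth_on_def by blast+

lemma compact_bound:
  fixes g :: "'a::metric_space \<Rightarrow> real"
  assumes "compact S" "continuous_on S g"
  shows "\<exists>B\<ge>0. \<forall>x\<in>S. \<bar>g x\<bar> \<le> B"
proof -
  have "bounded (g ` S)" using compact_continuous_image[OF assms(2,1)] compact_imp_bounded by blast
  then obtain B where "\<forall>x\<in>S. \<bar>g x\<bar> \<le> B" unfolding bounded_iff by auto
  then show ?thesis by (intro exI[of _ "max 0 B"]) auto
qed

lemma compact_pos_lower:
  fixes g :: "'a::metric_space \<Rightarrow> real"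
  assumes "compact S" "continuous_on S g" "\<forall>x\<in>S. g x > 0"
  shows "\<exists>m>0. \<forall>x\<in>S. m \<le> g x"
proof (cases "S = {}")
  case True then show ?thesis by (intro exI[of _ 1]) auto
next
  case False
  obtain x0 where "x0 \<in> S" "\<forall>x\<in>S. g x0 \<le> g x"
    using compact_attains_inf[OF compact_continuous_image[OF assms(2,1)]] False by auto
  then show ?thesis using assms(3) by (intro exI[of _ "g x0"]) auto
qed

lemma holder_cont:
  assumes "holder_on \<alpha> S f" "\<alpha> > 0"
  shows "continuous_on S f"
proof -
  obtain H where H: "\<forall>x\<in>S. \<forall>y\<in>S. \<bar>f x - f y\<bar> \<le> H * dist x y powr \<alpha>"
    using assms unfolding holder_on_def by blast
  show ?thesis unfolding continuous_on_iff
  proof (intro ballI allI impI)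
    fix x e assume x: "x \<in> S" and e: "(e::real) > 0"
    define d where "d = (e / (\<bar>H\<bar> + 1)) powr (1 / \<alpha>)"
    have ep: "e / (\<bar>H\<bar> + 1) > 0" using e by (simp add: add_nonneg_pos)
    have d: "d > 0" using ep unfolding d_def by (metis powr_gt_zero less_irrefl)
    show "\<exists>d>0. \<forall>x'\<in>S. dist x' x < d \<longrightarrow> dist (f x') (f x) < e"
    proof (intro exI[of _ d] conjI ballI impI d)
      fix y assume y: "y \<in> S" and dy: "dist y x < d"
      have "dist y x powr \<alpha> < d powr \<alpha>"
        using dy assms(2) by (intro powr_less_mono2) auto
      also have "d powr \<alpha> = e / (\<bar>H\<bar> + 1)"
        unfolding d_def using ep assms(2) e by (simp add: powr_powr)
      finally have lt: "dist y x powr \<alpha> < e / (\<bar>H\<bar> + 1)" .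
      have "\<bar>f y - f x\<bar> \<le> H * dist y x powr \<alpha>" using H x y by blast
      also have "\<dots> \<le> \<bar>H\<bar> * dist y x powr \<alpha>" by (simp add: mult_right_mono)
      also have "\<dots> \<le> \<bar>H\<bar> * (e / (\<bar>H\<bar> + 1))" using lt by (intro mult_left_mono) auto
      also have "\<dots> < e" using e by (simp add: field_simps)
      finally show "dist (f y) (f x) < e" by (simp add: dist_real_def)
    qed
  qed
qed

lemma grad_inner: "(\<Sum>i\<in>UNIV. pd i f x * d$i) = grad f x \<bullet> d"
  by (simp add: grad_def inner_vec_def)



lemma interior_lap:
  fixes u w :: "real^'n \<Rightarrow> real"
  assumes V: "open V" "x0 \<in> V"
    and du: "\<forall>y\<in>V. \<forall>i. (\<lambda>t. u (y + t *\<^sub>R axis i 1)) differentiable (at 0)"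
    and du2: "\<forall>y\<in>V. \<forall>i k. (\<lambda>t. pd k u (y + t *\<^sub>R axis i 1)) differentiable (at 0)"
    and dw: "\<forall>y i. (\<lambda>t. w (y + t *\<^sub>R axis i 1)) differentiable (at 0)"
    and dw2: "\<forall>i. (\<lambda>t. pd i w (x0 + t *\<^sub>R axis i 1)) differentiable (at 0)"
    and le: "\<forall>y\<in>V. u y \<le> t * w y" and eq: "u x0 = t * w x0"
  shows "laplacian u x0 \<le> t * laplacian w x0"
proof -
  obtain r where r: "r > 0" "ball x0 r \<subseteq> V" using V open_contains_ball by blast
  have inb: "x0 + s *\<^sub>R axis i 1 \<in> V" if "\<bar>s\<bar> < r" for s i
    using r that by (auto simp: dist_norm)
  have "pd i (pd i u) x0 \<le> t * pd i (pd i w) x0" for i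
  proof (rule pd2_le[OF r(1)])
    fix s :: real assume s: "\<bar>s\<bar> < r"
    show "(\<lambda>ta. u (x0 + s *\<^sub>R axis i 1 + ta *\<^sub>R axis i 1)) differentiable at 0"
      using du inb[OF s] by blast
    show "(\<lambda>ta. w (x0 + s *\<^sub>R axis i 1 + ta *\<^sub>R axis i 1)) differentiable at 0"
      using dw by blast
    show "u (x0 + s *\<^sub>R axis i 1) - t * w (x0 + s *\<^sub>R axis i 1) \<le> u x0 - t * w x0"
      using le inb[OF s] eq by force
  next
    show "(\<lambda>ta. pd i u (x0 + ta *\<^sub>R axis i 1)) differentiable at 0" using du2 V(2) by blast
    show "(\<lambda>ta. pd i w (x0 + ta *\<^sub>R axis i 1)) differentiable at 0" using dw2 by blast
  qed
  then show ?thesis unfolding laplacian_def by (simp add: sum_distrib_left sum_mono)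
qed

lemma dir_deriv_grad:
  fixes f :: "real^'n \<Rightarrow> real"
  assumes "open U" "x \<in> U"
    and "\<forall>y\<in>U. \<forall>i. (\<lambda>t. f (y + t *\<^sub>R axis i 1)) differentiable (at 0)"
    and "\<forall>i. continuous_on U (pd i f)"
  shows "((\<lambda>s. f (x + s *\<^sub>R d)) has_real_derivative (grad f x \<bullet> d)) (at 0)"
  using dir_deriv[OF assms] by (simp add: grad_inner)

lemma boundary_contra:
  fixes u \<rho> \<tau> :: "real^'n \<Rightarrow> real" and \<Omega> Om U :: "(real^'n) set"
  assumes d\<rho>: "\<forall>y i. (\<lambda>t. \<rho> (y + t *\<^sub>R axis i 1)) differentiable (at 0)" "\<forall>i. continuous_on UNIV (pd i \<rho>)"
    and d\<tau>: "\<forall>y i. (\<lambda>t. \<tau> (y + t *\<^sub>R axis i 1)) differentiable (at 0)" "\<forall>i. continuous_on UNIV (pd i \<tau>)"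
    and \<rho>0: "\<rho> x0 = 0" "grad \<rho> x0 \<noteq> 0" "\<forall>y. \<rho> y < 0 \<longrightarrow> y \<in> \<Omega>"
    and \<Omega>\<rho>: "\<forall>y\<in>\<Omega>. \<rho> y < 0"
    and \<tau>0: "\<tau> x0 = 0" "grad \<tau> x0 \<noteq> 0" "\<forall>y. \<tau> y < 0 \<longrightarrow> y \<in> \<Omega>"
    and U: "open U" "x0 \<in> U"
    and du: "\<forall>y\<in>U. \<forall>i. (\<lambda>t. u (y + t *\<^sub>R axis i 1)) differentiable (at 0)" "\<forall>i. continuous_on U (pd i u)"
    and neu: "grad u x0 \<bullet> grad \<rho> x0 = 0"
    and t: "t > 0" and j: "j > 0"
    and le: "\<forall>y\<in>\<Omega>. u y \<le> t * (A - exp (- (j * \<tau> y)))"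
    and eq: "u x0 = t * (A - exp (- (j * \<tau> x0)))"
  shows False
proof -
  define g\<rho> where "g\<rho> = grad \<rho> x0"
  define g\<tau> where "g\<tau> = grad \<tau> x0"
  have Dr: "((\<lambda>s. \<rho> (x0 + s *\<^sub>R d)) has_real_derivative (g\<rho> \<bullet> d)) (at 0)" for d
    unfolding g\<rho>_def by (rule dir_deriv_grad) (use d\<rho> in auto)
  have Dt: "((\<lambda>s. \<tau> (x0 + s *\<^sub>R d)) has_real_derivative (g\<tau> \<bullet> d)) (at 0)" for d
    unfolding g\<tau>_def by (rule dir_deriv_grad) (use d\<tau> in auto)
  have Du: "((\<lambda>s. u (x0 + s *\<^sub>R d)) has_real_derivative (grad u x0 \<bullet> d)) (at 0)" for d
    by (rule dir_deriv_grad[OF U]) (use du in auto)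
  have c: "g\<tau> \<bullet> g\<rho> > 0"
  proof (rule ccontr)
    assume "\<not> g\<tau> \<bullet> g\<rho> > 0"
    then have cle: "g\<tau> \<bullet> g\<rho> \<le> 0" by simp
    define e where "e = g\<rho> - g\<tau>"
    have gg: "g\<tau> \<bullet> g\<tau> > 0" using \<tau>0(2) unfolding g\<tau>_def by simp
    have n1: "g\<tau> \<bullet> e < 0" unfolding e_def inner_diff_right using cle gg inner_commute[of g\<tau> g\<rho>] by linarith
    have gr: "g\<rho> \<bullet> g\<rho> > 0" using \<rho>0(2) unfolding g\<rho>_def by simp
    have p1: "g\<rho> \<bullet> e > 0" unfolding e_def inner_diff_right using cle gr inner_commute[of g\<tau> g\<rho>] by linarith
    obtain d1 where d1: "d1 > 0" "\<And>h. h > 0 \<Longrightarrow> h < d1 \<Longrightarrow> \<tau> (x0 + 0 *\<^sub>R e) > \<tau> (x0 + (0 + h) *\<^sub>R e)"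
      using DERIV_neg_dec_right[OF Dt n1] by blast
    obtain d2 where d2: "d2 > 0" "\<And>h. h > 0 \<Longrightarrow> h < d2 \<Longrightarrow> \<rho> (x0 + 0 *\<^sub>R e) < \<rho> (x0 + (0 + h) *\<^sub>R e)"
      using DERIV_pos_inc_right[OF Dr p1] by blast
    define h where "h = min d1 d2 / 2"
    have h: "h > 0" "h < d1" "h < d2" using d1 d2 by (auto simp: h_def)
    have "\<tau> (x0 + h *\<^sub>R e) < 0" using d1(2)[OF h(1,2)] \<tau>0(1) by simp
    then have "x0 + h *\<^sub>R e \<in> \<Omega>" using \<tau>0(3) by blast
    then have "\<rho> (x0 + h *\<^sub>R e) < 0" using \<Omega>\<rho> by blast
    moreover have "\<rho> (x0 + h *\<^sub>R e) > 0" using d2(2)[OF h(1,3)] \<rho>0(1) by simp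
    ultimately show False by simp
  qed
  define d where "d = - g\<rho>"
  have Dphi: "((\<lambda>s. u (x0 + s *\<^sub>R d) - t * (A - exp (- (j * \<tau> (x0 + s *\<^sub>R d))))) has_real_derivative
      (grad u x0 \<bullet> d - t * (- (exp (- (j * \<tau> (x0 + 0 *\<^sub>R d))) * (- (j * (g\<tau> \<bullet> d))))))) (at 0)"
    apply (intro derivative_eq_intros)
    apply (rule refl | rule Du | rule Dt)+
    by simp
  have pos: "grad u x0 \<bullet> d - t * (- (exp (- (j * \<tau> (x0 + 0 *\<^sub>R d))) * (- (j * (g\<tau> \<bullet> d))))) > 0"
    using neu c t j \<tau>0(1) unfolding d_def g\<rho>_def by (simp add: inner_commute)
  obtain d3 where d3: "d3 > 0" "\<And>h. h > 0 \<Longrightarrow> h < d3 \<Longrightarrow>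
      u (x0 + 0 *\<^sub>R d) - t * (A - exp (- (j * \<tau> (x0 + 0 *\<^sub>R d)))) <
      u (x0 + (0 + h) *\<^sub>R d) - t * (A - exp (- (j * \<tau> (x0 + (0 + h) *\<^sub>R d))))"
    using DERIV_pos_inc_right[OF Dphi pos] by blast
  have n2: "g\<rho> \<bullet> d < 0" using \<rho>0(2) unfolding d_def g\<rho>_def by simp
  obtain d4 where d4: "d4 > 0" "\<And>h. h > 0 \<Longrightarrow> h < d4 \<Longrightarrow> \<rho> (x0 + 0 *\<^sub>R d) > \<rho> (x0 + (0 + h) *\<^sub>R d)"
    using DERIV_neg_dec_right[OF Dr n2] by blast
  define h where "h = min d3 d4 / 2"
  have h: "h > 0" "h < d3" "h < d4" using d3 d4 by (auto simp: h_def)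
  have "\<rho> (x0 + h *\<^sub>R d) < 0" using d4(2)[OF h(1,3)] \<rho>0(1) by simp
  then have "x0 + h *\<^sub>R d \<in> \<Omega>" using \<rho>0(3) by blast
  then have "u (x0 + h *\<^sub>R d) - t * (A - exp (- (j * \<tau> (x0 + h *\<^sub>R d)))) \<le> 0" using le by force
  moreover have "u x0 - t * (A - exp (- (j * \<tau> x0))) = 0" using eq by simp
  ultimately show False using d3(2)[OF h(1,2)] by simp
qed



lemma rhs_bound:
  fixes lam \<Lambda> \<epsilon> bx Bb u0 q :: real
  assumes "0 \<le> lam" "lam \<le> \<Lambda>" "0 < \<epsilon>" "\<epsilon> \<le> 1" "\<bar>bx\<bar> \<le> Bb" "u0 \<ge> 1" "1 < q" "q < 2"
  shows "lam * (bx - \<epsilon>) * \<bar>u0 + \<epsilon>\<bar> powr (q - 2) * u0 \<le> 2 * (\<Lambda> * (Bb + 1)) * u0 powr (q - 1)"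
proof -
  have pe: "u0 + \<epsilon> > 0" using assms by simp
  define X where "X = \<bar>u0 + \<epsilon>\<bar> powr (q - 2) * u0"
  have X0: "X \<ge> 0" unfolding X_def using assms by simp
  have "X \<le> (u0 + \<epsilon>) powr (q - 2) * (u0 + \<epsilon>)"
    unfolding X_def using pe assms by (simp add: abs_of_pos)
  also have "\<dots> = (u0 + \<epsilon>) powr (q - 1)"
    using pe powr_add[of "u0 + \<epsilon>" "q - 2" 1] by simp
  also have "\<dots> \<le> (2 * u0) powr (q - 1)"
    using assms pe by (intro powr_mono2) auto
  also have "\<dots> = 2 powr (q - 1) * u0 powr (q - 1)"
    using assms by (simp add: powr_mult)
  also have "\<dots> \<le> 2 * u0 powr (q - 1)"
  proof -
    have "2 powr (q - 1) \<le> 2 powr 1" using assms by (intro powr_mono) auto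
    then show ?thesis by (intro mult_right_mono) auto
  qed
  finally have Xle: "X \<le> 2 * u0 powr (q - 1)" .
  have "lam * (bx - \<epsilon>) \<le> lam * \<bar>bx - \<epsilon>\<bar>" using assms by (intro mult_left_mono) auto
  also have "\<dots> \<le> \<Lambda> * (Bb + 1)"
    using assms by (intro mult_mono) auto
  finally have c: "lam * (bx - \<epsilon>) \<le> \<Lambda> * (Bb + 1)" .
  have "lam * (bx - \<epsilon>) * X \<le> \<Lambda> * (Bb + 1) * X" using c X0 by (intro mult_right_mono)
  also have "\<dots> \<le> \<Lambda> * (Bb + 1) * (2 * u0 powr (q - 1))"
    using Xle assms by (intro mult_left_mono) auto
  finally have fin: "lam * (bx - \<epsilon>) * X \<le> \<Lambda> * (Bb + 1) * (2 * u0 powr (q - 1))" .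
  have e1: "2 * (\<Lambda> * (Bb + 1)) * u0 powr (q - 1) = \<Lambda> * (Bb + 1) * (2 * u0 powr (q - 1))" by simp
  have e2: "lam * (bx - \<epsilon>) * \<bar>u0 + \<epsilon>\<bar> powr (q - 2) * u0 = lam * (bx - \<epsilon>) * X"
    unfolding X_def by (simp only: mult.assoc)
  show ?thesis unfolding e1 e2 by (rule fin)
qed

lemma pterm:
  fixes u0 :: real assumes "u0 > 0"
  shows "a0 * \<bar>u0\<bar> powr (p - 2) * u0 = a0 * u0 powr (p - 1)"
proof -
  have "\<bar>u0\<bar> powr (p - 2) * u0 = u0 powr (p - 2) * u0 powr 1" using assms by (simp add: abs_of_pos)
  also have "\<dots> = u0 powr (p - 1)" by (subst powr_add[symmetric]) simp
  finally show ?thesis by (metis mult.assoc)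
qed

lemma boundV:
  fixes u0 \<kappa> A L q :: real
  assumes "u0 \<ge> 1" "\<kappa> > 0" "A > 0" "L > 0" "\<kappa> * u0 \<le> A * (2 * L * u0 powr (q - 1))" "q < 2"
  shows "u0 \<le> (2 * L * A / \<kappa>) powr (1 / (2 - q))"
proof -
  have up: "u0 powr (q - 1) > 0" using assms by simp
  have "u0 powr (2 - q) = u0 powr (1 - (q - 1))" by simp
  also have "\<dots> = u0 powr 1 / u0 powr (q - 1)"
    using assms by (simp only: powr_diff)
  also have "\<dots> = u0 / u0 powr (q - 1)" using assms by simp
  also have "\<dots> \<le> 2 * L * A / \<kappa>"
    using assms up by (simp add: divide_simps) (simp add: algebra_simps)
  finally have le: "u0 powr (2 - q) \<le> 2 * L * A / \<kappa>" .
  have "u0 = (u0 powr (2 - q)) powr (1 / (2 - q))"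
    using assms by (simp add: powr_powr)
  also have "\<dots> \<le> (2 * L * A / \<kappa>) powr (1 / (2 - q))"
    using le assms by (intro powr_mono2) auto
  finally show ?thesis .
qed

lemma boundE:
  fixes u0 \<delta> K p :: real
  assumes "u0 \<ge> 1" "\<delta> > 0" "\<delta> * u0 powr (p - 1) \<le> K * u0" "p > 2"
  shows "u0 \<le> (K / \<delta>) powr (1 / (p - 2))"
proof -
  have "u0 powr (p - 1) = u0 powr (p - 2) * u0"
    using assms powr_add[of u0 "p - 2" 1] by simp
  then have "\<delta> * u0 powr (p - 2) * u0 \<le> K * u0" using assms by (simp add: mult.assoc)
  then have le: "u0 powr (p - 2) \<le> K / \<delta>"
    using assms by (simp add: divide_simps) (smt (verit) mult.commute mult_right_le_imp_le)
  have "u0 = (u0 powr (p - 2)) powr (1 / (p - 2))"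
    using assms by (simp add: powr_powr)
  also have "\<dots> \<le> (K / \<delta>) powr (1 / (p - 2))"
    using le assms by (intro powr_mono2) auto
  finally show ?thesis .
qed



theorem proposition6p3:
  fixes \<Omega> :: "(real^'n) set" and a b :: "real^'n \<Rightarrow> real"
    and p q \<alpha> \<Lambda> C1 :: real
  assumes N: "CARD('n) \<ge> 2"
    and dom: "smooth_bounded_domain \<Omega>"
    and pq: "1 < q" "q < 2" "2 < p"
    and alpha: "0 < \<alpha>" "\<alpha> < 1"
    and ha: "holder_on \<alpha> (closure \<Omega>) a" and hb: "holder_on \<alpha> (closure \<Omega>) b"
    and plus_dom: "smooth_bounded_domain {x\<in>\<Omega>. a x > 0}"
    and minus_dom: "smooth_bounded_domain {x\<in>\<Omega>. a x < 0}"
    and plus_cl: "closure {x\<in>\<Omega>. a x > 0} \<subseteq> \<Omega>"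
    and union: "closure {x\<in>\<Omega>. a x > 0} \<union> {x\<in>\<Omega>. a x < 0} = \<Omega>"
    and Lam: "\<Lambda> > 0"
    and C1: "C1 > 0"
    and bound_plus: "\<And>u lam \<epsilon>. \<lbrakk>0 \<le> lam; lam \<le> \<Lambda>; 0 < \<epsilon>; \<epsilon> \<le> 1;
         nontrivial_nonneg_solution \<Omega> a b p q lam \<epsilon> u\<rbrakk> \<Longrightarrow>
         \<forall>x\<in>closure {x\<in>\<Omega>. a x > 0}. \<bar>u x\<bar> \<le> C1"
  shows "\<exists>C2>0. \<forall>u lam \<epsilon>. 0 \<le> lam \<and> lam \<le> \<Lambda> \<and> 0 < \<epsilon> \<and> \<epsilon> \<le> 1 \<and>
            nontrivial_nonneg_solution \<Omega> a b p q lam \<epsilon> u \<longrightarrow>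
            (\<forall>x\<in>closure \<Omega>. \<bar>u x\<bar> \<le> C2)"
proof -
  define Op where "Op = {x\<in>\<Omega>. a x > 0}"
  define Om where "Om = {x\<in>\<Omega>. a x < 0}"
  define K where "K = closure \<Omega>"
  have \<Omega>: "open \<Omega>" "bounded \<Omega>" "\<Omega> \<noteq> {}" "\<exists>\<rho>. defining_function \<Omega> \<rho>"
    using dom unfolding smooth_bounded_domain_def by auto
  define \<rho>0 where "\<rho>0 = (SOME \<rho>. defining_function \<Omega> \<rho>)"
  have h\<rho>: "defining_function \<Omega> \<rho>0" unfolding \<rho>0_def using \<Omega>(4) by (rule someI_ex)
  have \<rho>: "smooth_on UNIV \<rho>0" "\<Omega> = {x. \<rho>0 x < 0}" "frontier \<Omega> = {x. \<rho>0 x = 0}"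
      "\<forall>x\<in>frontier \<Omega>. grad \<rho>0 x \<noteq> 0"
    using h\<rho> unfolding defining_function_def by auto
  have Om: "open Om" "\<exists>\<tau>. defining_function Om \<tau>"
    using minus_dom unfolding smooth_bounded_domain_def Om_def by auto
  then obtain \<tau> where h\<tau>: "defining_function Om \<tau>" by blast
  have \<tau>: "smooth_on UNIV \<tau>" "Om = {x. \<tau> x < 0}" "frontier Om = {x. \<tau> x = 0}"
      "\<forall>x\<in>frontier Om. grad \<tau> x \<noteq> 0"
    using h\<tau> unfolding defining_function_def by auto
  note s\<tau> = smooth_facts[OF \<tau>(1)]
  note s\<rho> = smooth_facts[OF \<rho>(1)]
  have OmO: "Om \<subseteq> \<Omega>" unfolding Om_def by auto
  have OpO: "closure Op \<subseteq> \<Omega>" using plus_cl unfolding Op_def .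
  have uni: "closure Op \<union> Om = \<Omega>" using union unfolding Op_def Om_def .
  have K: "compact K" "K \<noteq> {}" "\<Omega> \<subseteq> K"
    using \<Omega> unfolding K_def by (auto simp: compact_closure closure_subset)
  have clOm: "closure Om \<subseteq> K" unfolding K_def using OmO by (rule closure_mono)
  have frO: "frontier \<Omega> \<subseteq> frontier Om"
  proof
    fix x assume x: "x \<in> frontier \<Omega>"
    then have xn: "x \<notin> \<Omega>" "x \<in> closure \<Omega>" using \<Omega>(1) by (auto simp: frontier_def interior_open)
    then have "x \<notin> closure Op" using OpO by blast
    then obtain r where r: "r > 0" "ball x r \<subseteq> - closure Op"
      using open_contains_ball[of "- closure Op"] by blast
    have "x \<in> closure Om"
      unfolding closure_approachable
    proof (intro allI impI)
      fix e :: real assume e: "e > 0"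
      obtain y where y: "y \<in> \<Omega>" "dist y x < min e r"
        using xn(2) e r unfolding closure_approachable by (metis min_less_iff_conj)
      then have "y \<notin> closure Op" using r by (auto simp: dist_commute)
      then have "y \<in> Om" using uni y by blast
      then show "\<exists>y\<in>Om. dist y x < e" using y by auto
    qed
    moreover have "x \<notin> interior Om" using xn OmO Om(1) by (auto simp: interior_open)
    ultimately show "x \<in> frontier Om" by (simp add: frontier_def)
  qed
  have classify: "x \<in> closure Op \<or> x \<in> frontier \<Omega> \<or> x \<in> Om" if "x \<in> K" for x
    using that uni \<Omega>(1) unfolding K_def by (auto simp: frontier_def interior_open)
  have acont: "continuous_on K a" unfolding K_def using holder_cont[OF ha alpha(1)] .
  have bcont: "continuous_on K b" unfolding K_def using holder_cont[OF hb alpha(1)] .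
  obtain Bb where Bb: "Bb \<ge> 0" "\<forall>x\<in>K. \<bar>b x\<bar> \<le> Bb" using compact_bound[OF K(1) bcont] by blast
  define gsq where "gsq = (\<lambda>x. \<Sum>i\<in>UNIV. (pd i \<tau> x)\<^sup>2)"
  have gsqc: "continuous_on UNIV gsq"
    unfolding gsq_def using s\<tau>(3) by (intro continuous_on_sum continuous_on_power) auto
  have gsq0: "gsq x \<ge> 0" for x unfolding gsq_def by (simp add: sum_nonneg)
  have lapc: "continuous_on UNIV (laplacian \<tau>)"
    unfolding laplacian_def[abs_def] using s\<tau>(5) by (intro continuous_on_sum) auto
  have frc: "compact (frontier Om)"
  proof -
    have "frontier Om \<subseteq> K" using clOm by (auto simp: frontier_def)
    then have "bounded (frontier Om)" using K(1) bounded_subset compact_imp_bounded by blast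
    then show ?thesis by (simp add: compact_eq_bounded_closed frontier_closed)
  qed
  have gpos: "\<forall>x\<in>frontier Om. gsq x > 0"
  proof
    fix x assume "x \<in> frontier Om"
    then have "grad \<tau> x \<noteq> 0" using \<tau>(4) by blast
    then obtain i where i: "pd i \<tau> x \<noteq> 0" unfolding grad_def by (auto simp: vec_eq_iff)
    show "gsq x > 0" unfolding gsq_def
      by (rule sum_pos2[where i=i]) (use i in auto)
  qed
  obtain m2 where m2: "m2 > 0" "\<forall>x\<in>frontier Om. m2 \<le> gsq x"
    using compact_pos_lower[OF frc continuous_on_subset[OF gsqc] gpos] by blast
  obtain R\<tau> where R\<tau>: "R\<tau> \<ge> 0" "\<forall>x\<in>K. \<bar>\<tau> x\<bar> \<le> R\<tau>"
    using compact_bound[OF K(1) continuous_on_subset[OF s\<tau>(1)]] by blast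
  obtain D\<tau> where D\<tau>: "D\<tau> \<ge> 0" "\<forall>x\<in>K. \<bar>laplacian \<tau> x\<bar> \<le> D\<tau>"
    using compact_bound[OF K(1) continuous_on_subset[OF lapc]] by blast
  define j where "j = max 1 (2 * (D\<tau> + 1) / m2)"
  have j: "j \<ge> 1" "j * m2 / 2 \<ge> D\<tau> + 1"
  proof -
    show "j \<ge> 1" unfolding j_def by simp
    have "2 * (D\<tau> + 1) / m2 \<le> j" unfolding j_def by simp
    then show "j * m2 / 2 \<ge> D\<tau> + 1" using m2(1) by (simp add: field_simps)
  qed
  define A where "A = 1 + exp (j * R\<tau>)"
  define w where "w = (\<lambda>x. A - exp (- (j * \<tau> x)))"
  define \<kappa> where "\<kappa> = exp (- (j * R\<tau>))"
  have \<kappa>: "\<kappa> > 0" unfolding \<kappa>_def by simp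
  have expb: "exp (- (j * \<tau> x)) \<le> exp (j * R\<tau>)" "\<kappa> \<le> exp (- (j * \<tau> x))" if "x \<in> K" for x
  proof -
    have "\<bar>\<tau> x\<bar> \<le> R\<tau>" using R\<tau> that by blast
    then have "j * \<bar>\<tau> x\<bar> \<le> j * R\<tau>" using j by (intro mult_left_mono) auto
    moreover have "- (j * \<tau> x) \<le> j * \<bar>\<tau> x\<bar>" "j * \<tau> x \<le> j * \<bar>\<tau> x\<bar>"
      using j mult_left_mono[of "- \<tau> x" "\<bar>\<tau> x\<bar>" j] mult_left_mono[of "\<tau> x" "\<bar>\<tau> x\<bar>" j] by auto
    ultimately show "exp (- (j * \<tau> x)) \<le> exp (j * R\<tau>)" "\<kappa> \<le> exp (- (j * \<tau> x))"
      unfolding \<kappa>_def by auto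
  qed
  have wb: "1 \<le> w x" "w x \<le> A" if "x \<in> K" for x
    using expb[OF that] unfolding w_def A_def by auto
  have A: "A > 0" unfolding A_def by (smt (verit) exp_gt_zero)
  have wc: "continuous_on UNIV w" unfolding w_def using s\<tau>(1)
    by (intro continuous_intros) auto
  have lapw: "laplacian w x = j * exp (- (j * \<tau> x)) * (laplacian \<tau> x - j * gsq x)" for x
    unfolding w_def gsq_def by (rule lap_w) (use s\<tau> in auto)
  have lapwV: "- laplacian w x \<ge> \<kappa>" if "x \<in> K" "gsq x \<ge> m2 / 2" for x
  proof -
    have g1: "j * gsq x \<ge> j * (m2 / 2)" using that j by (intro mult_left_mono) auto
    have l1: "laplacian \<tau> x \<le> D\<tau>" using D\<tau> that by force
    have "j * gsq x - laplacian \<tau> x \<ge> 1" using g1 l1 j(2) by simp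
    then have "j * exp (- (j * \<tau> x)) * (j * gsq x - laplacian \<tau> x) \<ge> j * exp (- (j * \<tau> x)) * 1"
      using j by (intro mult_left_mono) auto
    moreover have "j * exp (- (j * \<tau> x)) \<ge> 1 * exp (- (j * \<tau> x))" using j by (intro mult_right_mono) auto
    moreover have "- laplacian w x = j * exp (- (j * \<tau> x)) * (j * gsq x - laplacian \<tau> x)"
      unfolding lapw by (simp add: algebra_simps)
    ultimately show ?thesis using expb(2)[OF that(1)] by linarith
  qed
  define Dw where "Dw = j * exp (j * R\<tau>) * D\<tau>"
  have Dw: "Dw \<ge> 0" unfolding Dw_def using j D\<tau> by simp
  have lapwE: "laplacian w x \<le> Dw" if "x \<in> K" for x
  proof -
    have "laplacian \<tau> x - j * gsq x \<le> D\<tau>" using D\<tau> that gsq0[of x] j by (smt (verit) abs_le_D1 mult_nonneg_nonneg)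
    then have "j * exp (- (j * \<tau> x)) * (laplacian \<tau> x - j * gsq x) \<le> j * exp (- (j * \<tau> x)) * D\<tau>"
      using j by (intro mult_left_mono) auto
    also have "\<dots> \<le> j * exp (j * R\<tau>) * D\<tau>"
      using expb(1)[OF that] j D\<tau> by (intro mult_right_mono mult_left_mono) auto
    finally show ?thesis unfolding lapw Dw_def .
  qed
  define E where "E = closure Om \<inter> {x. gsq x \<le> m2 / 2}"
  have Ec: "compact E"
  proof -
    have "closed {x. gsq x \<le> m2 / 2}" using gsqc by (intro closed_Collect_le) auto
    then have "closed E" unfolding E_def by auto
    moreover have "bounded E" using clOm K(1) unfolding E_def
      by (meson bounded_subset compact_imp_bounded inf.coboundedI1)
    ultimately show ?thesis by (simp add: compact_eq_bounded_closed)
  qed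
  have EOm: "E \<subseteq> Om"
  proof
    fix x assume x: "x \<in> E"
    have "x \<notin> frontier Om" using x m2 unfolding E_def by fastforce
    then show "x \<in> Om" using x Om(1) unfolding E_def by (auto simp: frontier_def interior_open)
  qed
  obtain \<delta> where \<delta>: "\<delta> > 0" "\<forall>x\<in>E. \<delta> \<le> - a x"
  proof -
    have "continuous_on E (\<lambda>x. - a x)"
      using acont EOm clOm closure_subset by (intro continuous_intros continuous_on_subset[OF acont]) auto
    moreover have "\<forall>x\<in>E. - a x > 0" using EOm unfolding Om_def by auto
    ultimately show ?thesis using compact_pos_lower[OF Ec] that by blast
  qed
  define L where "L = \<Lambda> * (Bb + 1)"
  have L: "L > 0" unfolding L_def using Lam Bb by simp
  define Tv where "Tv = (2 * L * A / \<kappa>) powr (1 / (2 - q))"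
  define Te where "Te = ((2 * L + Dw) / \<delta>) powr (1 / (p - 2))"
  define T where "T = max (max 1 C1) (max Tv Te)"
  have T: "T \<ge> 1" "T \<ge> C1" "T \<ge> Tv" "T \<ge> Te" unfolding T_def by auto
  show ?thesis
  proof (intro exI[of _ "T * A"] conjI allI impI)
    show "T * A > 0" using T A by simp
    fix u lam \<epsilon>
    assume hyp: "0 \<le> lam \<and> lam \<le> \<Lambda> \<and> 0 < \<epsilon> \<and> \<epsilon> \<le> 1 \<and> nontrivial_nonneg_solution \<Omega> a b p q lam \<epsilon> u"
    then have lam: "0 \<le> lam" "lam \<le> \<Lambda>" and eps: "0 < \<epsilon>" "\<epsilon> \<le> 1"
      and sol: "nontrivial_nonneg_solution \<Omega> a b p q lam \<epsilon> u" by auto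
    have u2: "Ck_on 2 \<Omega> u" and uU: "\<exists>U. open U \<and> closure \<Omega> \<subseteq> U \<and> Ck_on 1 U u"
      and pde: "\<forall>x\<in>\<Omega>. - laplacian u x =
         lam * (b x - \<epsilon>) * \<bar>u x + \<epsilon>\<bar> powr (q - 2) * u x + a x * \<bar>u x\<bar> powr (p - 2) * u x"
      and neu: "\<forall>x\<in>frontier \<Omega>. normal_derivative \<Omega> u x = 0"
      and unn: "\<forall>x\<in>closure \<Omega>. u x \<ge> 0"
      using sol unfolding nontrivial_nonneg_solution_def is_solution_def by auto
    obtain U where U: "open U" "K \<subseteq> U" "Ck_on 1 U u" using uU unfolding K_def by blast
    note su1 = Ck1_facts[OF U(3)]
    note su2 = Ck2_facts[OF u2]
    have ucont: "continuous_on K u" using su1(1) U(2) by (rule continuous_on_subset)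
    have rc: "continuous_on K (\<lambda>x. u x / w x)"
      using ucont continuous_on_subset[OF wc] wb by (intro continuous_on_divide) force+
    obtain x0 where x0: "x0 \<in> K" "\<forall>y\<in>K. u y / w y \<le> u x0 / w x0"
      using continuous_attains_sup[OF K(1) K(2) rc] by blast
    define t where "t = u x0 / w x0"
    have ub: "\<forall>y\<in>K. u y \<le> t * w y"
    proof
      fix y assume y: "y \<in> K"
      then have "u y / w y \<le> t" using x0 unfolding t_def by blast
      then show "u y \<le> t * w y" using wb[OF y] by (simp add: divide_le_eq)
    qed
    have eq0: "u x0 = t * w x0" unfolding t_def using wb[OF x0(1)] by simp
    have tT: "t \<le> T"
    proof (rule ccontr)
      assume "\<not> t \<le> T"
      then have tgt: "t > T" by simp
      have u0: "u x0 \<ge> t" "u x0 \<le> t * A"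
        using eq0 wb[OF x0(1)] tgt T by (auto intro: mult_left_mono)
      have "x0 \<in> closure Op \<or> x0 \<in> frontier \<Omega> \<or> x0 \<in> Om" using classify[OF x0(1)] .
      moreover have "x0 \<notin> closure Op"
      proof
        assume "x0 \<in> closure Op"
        then have "\<bar>u x0\<bar> \<le> C1" using bound_plus[OF lam eps sol] unfolding Op_def by blast
        then show False using u0 tgt T by auto
      qed
      moreover have "x0 \<notin> frontier \<Omega>"
      proof
        assume xf: "x0 \<in> frontier \<Omega>"
        have xfm: "x0 \<in> frontier Om" using xf frO by blast
        have nz: "grad \<rho>0 x0 \<noteq> 0" using \<rho>(4) xf by blast
        have "normal_derivative \<Omega> u x0 = 0" using neu xf by blast
        then have "grad u x0 \<bullet> ((1 / norm (grad \<rho>0 x0)) *\<^sub>R grad \<rho>0 x0) = 0"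
          unfolding normal_derivative_def outward_normal_def Let_def \<rho>0_def[symmetric] .
        then have neu0: "grad u x0 \<bullet> grad \<rho>0 x0 = 0" using nz by simp
        show False
        proof (rule boundary_contra[of \<rho>0 \<tau> x0 \<Omega> U u t j A])
          show "\<forall>y i. (\<lambda>t. \<rho>0 (y + t *\<^sub>R axis i 1)) differentiable at 0" "\<forall>i. continuous_on UNIV (pd i \<rho>0)"
            using s\<rho> by auto
          show "\<forall>y i. (\<lambda>t. \<tau> (y + t *\<^sub>R axis i 1)) differentiable at 0" "\<forall>i. continuous_on UNIV (pd i \<tau>)"
            using s\<tau> by auto
          show "\<rho>0 x0 = 0" using \<rho>(3) xf by blast
          show "grad \<rho>0 x0 \<noteq> 0" by (rule nz)
          show "\<forall>y. \<rho>0 y < 0 \<longrightarrow> y \<in> \<Omega>" "\<forall>y\<in>\<Omega>. \<rho>0 y < 0" using \<rho>(2) by auto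
          show "\<tau> x0 = 0" using \<tau>(3) xfm by blast
          show "grad \<tau> x0 \<noteq> 0" using \<tau>(4) xfm by blast
          show "\<forall>y. \<tau> y < 0 \<longrightarrow> y \<in> \<Omega>" using \<tau>(2) OmO by auto
          show "open U" "x0 \<in> U" using U x0 by auto
          show "\<forall>y\<in>U. \<forall>i. (\<lambda>t. u (y + t *\<^sub>R axis i 1)) differentiable at 0" "\<forall>i. continuous_on U (pd i u)"
            using su1 by auto
          show "grad u x0 \<bullet> grad \<rho>0 x0 = 0" by (rule neu0)
          show "t > 0" "j > 0" using tgt T j by auto
          show "\<forall>y\<in>\<Omega>. u y \<le> t * (A - exp (- (j * \<tau> y)))" using ub K(3) unfolding w_def by auto
          show "u x0 = t * (A - exp (- (j * \<tau> x0)))" using eq0 unfolding w_def .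
        qed
      qed
      moreover have "x0 \<notin> Om"
      proof
        assume xm: "x0 \<in> Om"
        then have xO: "x0 \<in> \<Omega>" using OmO by blast
        have lapu: "laplacian u x0 \<le> t * laplacian w x0"
        proof (rule interior_lap[OF \<Omega>(1) xO])
          show "\<forall>y\<in>\<Omega>. \<forall>i. (\<lambda>t. u (y + t *\<^sub>R axis i 1)) differentiable at 0" using su2 by auto
          show "\<forall>y\<in>\<Omega>. \<forall>i k. (\<lambda>t. pd k u (y + t *\<^sub>R axis i 1)) differentiable at 0" using su2 by auto
          show "\<forall>y i. (\<lambda>t. w (y + t *\<^sub>R axis i 1)) differentiable at 0"
            unfolding w_def using w_diff s\<tau> by blast
          show "\<forall>i. (\<lambda>t. pd i w (x0 + t *\<^sub>R axis i 1)) differentiable at 0"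
            unfolding w_def using pd2_w(2) s\<tau> by blast
          show "\<forall>y\<in>\<Omega>. u y \<le> t * w y" using ub K(3) by auto
          show "u x0 = t * w x0" by (rule eq0)
        qed
        define u0 where "u0 = u x0"
        have u01: "u0 \<ge> 1" using u0 tgt T unfolding u0_def by auto
        have ax: "a x0 < 0" using xm unfolding Om_def by auto
        have rb: "lam * (b x0 - \<epsilon>) * \<bar>u0 + \<epsilon>\<bar> powr (q - 2) * u0 \<le> 2 * L * u0 powr (q - 1)"
          unfolding L_def using rhs_bound[OF lam eps _ u01 pq(1,2), of "b x0" Bb] Bb x0(1) by auto
        have pt: "a x0 * \<bar>u0\<bar> powr (p - 2) * u0 = a x0 * u0 powr (p - 1)"
          using u01 by (intro pterm) auto
        have pde0: "- laplacian u x0 \<le> 2 * L * u0 powr (q - 1) + a x0 * u0 powr (p - 1)"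
        proof -
          have "- laplacian u x0 = lam * (b x0 - \<epsilon>) * \<bar>u0 + \<epsilon>\<bar> powr (q - 2) * u0 + a x0 * \<bar>u0\<bar> powr (p - 2) * u0"
            using pde xO unfolding u0_def by blast
          then show ?thesis using rb pt by linarith
        qed
        show False
        proof (cases "gsq x0 \<ge> m2 / 2")
          case True
          have "t * \<kappa> \<le> t * (- laplacian w x0)" using lapwV[OF x0(1) True] tgt T by (intro mult_left_mono) auto
          also have "\<dots> \<le> - laplacian u x0" using lapu by simp
          also have "\<dots> \<le> 2 * L * u0 powr (q - 1)"
            using pde0 ax u01 by (smt (verit) mult_nonneg_nonneg powr_ge_zero mult_neg_pos powr_gt_zero)
          finally have tk: "t * \<kappa> \<le> 2 * L * u0 powr (q - 1)" .
          have "\<kappa> * u0 \<le> \<kappa> * (t * A)" using u0 \<kappa> unfolding u0_def by (intro mult_left_mono) auto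
          also have "\<dots> = A * (t * \<kappa>)" by simp
          also have "\<dots> \<le> A * (2 * L * u0 powr (q - 1))" using tk A by (intro mult_left_mono) auto
          finally have "u0 \<le> Tv" unfolding Tv_def using boundV[OF u01 \<kappa> A L _ pq(2)] by blast
          then show False using u0 tgt T unfolding u0_def by auto
        next
          case False
          have xE: "x0 \<in> E" unfolding E_def using False xm closure_subset by auto
          have ad: "a x0 \<le> - \<delta>" using \<delta> xE by force
          have "- (t * Dw) \<le> t * (- laplacian w x0)" using lapwE[OF x0(1)] tgt T by simp
          also have "\<dots> \<le> - laplacian u x0" using lapu by simp
          also have "\<dots> \<le> 2 * L * u0 powr (q - 1) + a x0 * u0 powr (p - 1)" by (rule pde0)
          also have "\<dots> \<le> 2 * L * u0 powr (q - 1) + (- \<delta>) * u0 powr (p - 1)"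
            using ad by (intro add_left_mono mult_right_mono) auto
          finally have ineq: "\<delta> * u0 powr (p - 1) \<le> 2 * L * u0 powr (q - 1) + t * Dw" by simp
          have "u0 powr (q - 1) \<le> u0 powr 1" using u01 pq by (intro powr_mono) auto
          then have "2 * L * u0 powr (q - 1) \<le> 2 * L * u0" using L u01 by (intro mult_left_mono) auto
          moreover have "t * Dw \<le> u0 * Dw" using u0 Dw unfolding u0_def by (intro mult_right_mono) auto
          ultimately have "\<delta> * u0 powr (p - 1) \<le> (2 * L + Dw) * u0" using ineq by (simp add: algebra_simps)
          then have "u0 \<le> Te" unfolding Te_def using boundE[OF u01 \<delta>(1) _ pq(3)] by blast
          then show False using u0 tgt T unfolding u0_def by auto
        qed
      qed
      ultimately show False by blast
    qed
    show "\<forall>x\<in>closure \<Omega>. \<bar>u x\<bar> \<le> T * A"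
    proof
      fix x assume x: "x \<in> closure \<Omega>"
      then have xK: "x \<in> K" unfolding K_def .
      have "\<bar>u x\<bar> = u x" using unn x by simp
      also have "\<dots> \<le> t * w x" using ub xK by blast
      also have "\<dots> \<le> T * w x" using tT wb[OF xK] by (intro mult_right_mono) auto
      also have "\<dots> \<le> T * A" using wb[OF xK] T by (intro mult_left_mono) auto
      finally show "\<bar>u x\<bar> \<le> T * A" .
    qed
  qed
qed

end
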